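(* Let $n_1,n_2\ge3$. The graphs $\overline{L(K_{2,n_1})}$ and $\overline{L(K_{2,n_2})}$ are $\mathcal{C}$-$\mathrm{HH}$-symmetric if and only if they are isomorphic (i.e. $n_1=n_2$).
   Context: $\overline{L(K_{2,n})}$ (bipartite complement of a perfect matching) is the bipartite graph with parts $\{x_1,\dots,x_n\}$, $\{y_1,\dots,y_n\}$ and $x_i\sim y_j$ iff $i\ne j$. Subgraphs are induced; a homomorphism maps edges to edges. $G_1$ is $\mathcal{C}$-$\mathrm{HH}$-morphic to $G_2$ if every homomorphism from a finite connected induced subgraph $A$ of $G_1$ onto an induced subgraph $B$ of $G_2$ extends to a homomorphism $G_1\to G_2$; $G_1,G_2$ are $\mathcal{C}$-$\mathrm{HH}$-symmetric if each is $\mathcal{C}$-$\mathrm{HH}$-morphic to the other. *)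

theory Defs
  imports Main
begin

text \<open>A graph is given by a vertex set V and a symmetric irreflexive adjacency
relation E (only its restriction to V matters).\<close>

text \<open>The bipartite complement of a perfect matching, on vertices
x_i = (False, i), y_i = (True, i) for i < n; x_i ~ y_j iff i \<noteq> j.\<close>
definition bcpm_V :: "nat \<Rightarrow> (bool \<times> nat) set" where
  "bcpm_V n = {(b, i). i < n}"

definition bcpm_E :: "(bool \<times> nat) \<Rightarrow> (bool \<times> nat) \<Rightarrow> bool" where
  "bcpm_E u v \<longleftrightarrow> fst u \<noteq> fst v \<and> snd u \<noteq> snd v"

definition is_hom :: "'a set \<Rightarrow> ('a \<Rightarrow> 'a \<Rightarrow> bool) \<Rightarrow> 'b set \<Rightarrow> ('b \<Rightarrow> 'b \<Rightarrow> bool) \<Rightarrow> ('a \<Rightarrow> 'b) \<Rightarrow> bool" where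
  "is_hom A E1 B E2 f \<longleftrightarrow> f ` A \<subseteq> B \<and> (\<forall>x\<in>A. \<forall>y\<in>A. E1 x y \<longrightarrow> E2 (f x) (f y))"

definition connected_on :: "('a \<Rightarrow> 'a \<Rightarrow> bool) \<Rightarrow> 'a set \<Rightarrow> bool" where
  "connected_on E A \<longleftrightarrow> A \<noteq> {} \<and>
     (\<forall>x\<in>A. \<forall>y\<in>A. (\<lambda>u v. u \<in> A \<and> v \<in> A \<and> E u v)\<^sup>*\<^sup>* x y)"

definition C_HH_morphic :: "'a set \<Rightarrow> ('a \<Rightarrow> 'a \<Rightarrow> bool) \<Rightarrow> 'b set \<Rightarrow> ('b \<Rightarrow> 'b \<Rightarrow> bool) \<Rightarrow> bool" where
  "C_HH_morphic V1 E1 V2 E2 \<longleftrightarrow>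
     (\<forall>A B f. A \<subseteq> V1 \<and> finite A \<and> connected_on E1 A \<and> B \<subseteq> V2 \<and>
        is_hom A E1 B E2 f \<and> f ` A = B \<longrightarrow>
        (\<exists>g. is_hom V1 E1 V2 E2 g \<and> (\<forall>x\<in>A. g x = f x)))"

definition C_HH_symmetric :: "'a set \<Rightarrow> ('a \<Rightarrow> 'a \<Rightarrow> bool) \<Rightarrow> 'b set \<Rightarrow> ('b \<Rightarrow> 'b \<Rightarrow> bool) \<Rightarrow> bool" where
  "C_HH_symmetric V1 E1 V2 E2 \<longleftrightarrow> C_HH_morphic V1 E1 V2 E2 \<and> C_HH_morphic V2 E2 V1 E1"

definition graph_iso :: "'a set \<Rightarrow> ('a \<Rightarrow> 'a \<Rightarrow> bool) \<Rightarrow> 'b set \<Rightarrow> ('b \<Rightarrow> 'b \<Rightarrow> bool) \<Rightarrow> bool" where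
  "graph_iso V1 E1 V2 E2 \<longleftrightarrow>
     (\<exists>h. bij_betw h V1 V2 \<and> (\<forall>x\<in>V1. \<forall>y\<in>V1. E1 x y \<longleftrightarrow> E2 (h x) (h y)))"

end

theory Submission
  imports Defs
begin

lemma E_sym: "bcpm_E u v \<Longrightarrow> bcpm_E v u"
  by (auto simp: bcpm_E_def)

definition good :: "nat \<Rightarrow> bool \<Rightarrow> (bool \<times> nat) set \<Rightarrow> ((bool \<times> nat) \<Rightarrow> (bool \<times> nat)) \<Rightarrow> bool" where
  "good n s A f \<longleftrightarrow> A \<subseteq> bcpm_V n \<and> f ` A \<subseteq> bcpm_V n \<and> (\<forall>u\<in>A. fst (f u) = (fst u \<noteq> s))
     \<and> (\<forall>u\<in>A. \<forall>v\<in>A. bcpm_E u v \<longrightarrow> bcpm_E (f u) (f v))"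

lemma card_V: "card (bcpm_V n) = 2 * n"
proof -
  have "bcpm_V n = UNIV \<times> {..<n}" by (auto simp: bcpm_V_def)
  then show ?thesis by (simp add: card_cartesian_product)
qed

lemma finite_V: "finite (bcpm_V n)"
proof -
  have "bcpm_V n = UNIV \<times> {..<n}" by (auto simp: bcpm_V_def)
  then show ?thesis by simp
qed

lemma step_ext:
  assumes g: "good n s A f" and v: "v \<in> bcpm_V n" "v \<notin> A"
  shows "\<exists>c. good n s (insert v A) (f(v := (fst v \<noteq> s, c)))"
proof -
  define N where "N = {w\<in>A. bcpm_E v w}"
  define D where "D = (\<lambda>w. snd (f w)) ` N"
  have NS: "N \<subseteq> (\<lambda>j. (\<not> fst v, j)) ` ({..<n} - {snd v})"
  proof
    fix w assume "w \<in> N"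
    then have "w \<in> bcpm_V n" "bcpm_E v w" using g by (auto simp: N_def good_def)
    then show "w \<in> (\<lambda>j. (\<not> fst v, j)) ` ({..<n} - {snd v})"
      by (cases w) (auto simp: bcpm_V_def bcpm_E_def)
  qed
  have "card N \<le> card ((\<lambda>j. (\<not> fst v, j)) ` ({..<n} - {snd v}))"
    by (rule card_mono[OF _ NS]) simp
  also have "\<dots> \<le> card ({..<n} - {snd v})" by (rule card_image_le) simp
  also have "\<dots> < n" using v by (auto simp: bcpm_V_def card_Diff_singleton)
  finally have cN: "card N < n" .
  have fN: "finite N" by (rule finite_subset[OF NS]) simp
  have "card D \<le> card N" unfolding D_def by (rule card_image_le[OF fN])
  with cN have "card D < card {..<n}" by simp
  then have "\<not> {..<n} \<subseteq> D" using fN D_def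
    by (metis card_mono finite_imageI not_le)
  then obtain c where c: "c < n" "c \<notin> D" by auto
  define f' where "f' = f(v := (fst v \<noteq> s, c))"
  have "good n s (insert v A) f'"
    unfolding good_def
  proof (intro conjI ballI impI)
    show "insert v A \<subseteq> bcpm_V n" using g v by (auto simp: good_def)
    show "f' ` insert v A \<subseteq> bcpm_V n" using g c v by (auto simp: good_def f'_def bcpm_V_def)
    fix u assume "u \<in> insert v A"
    then show "fst (f' u) = (fst u \<noteq> s)" using g v by (auto simp: good_def f'_def)
  next
    fix u w assume u: "u \<in> insert v A" and w: "w \<in> insert v A" and e: "bcpm_E u w"
    have side: "\<And>x. x \<in> A \<Longrightarrow> fst (f x) = (fst x \<noteq> s)" using g by (auto simp: good_def)
    show "bcpm_E (f' u) (f' w)"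
    proof (cases "u = v")
      case True
      then have wv: "w \<noteq> v" using e by (auto simp: bcpm_E_def)
      then have wA: "w \<in> A" using w by auto
      then have "w \<in> N" using e True by (auto simp: N_def)
      then have "snd (f w) \<noteq> c" using c by (auto simp: D_def)
      then show ?thesis using True wv side[OF wA] e by (auto simp: f'_def bcpm_E_def)
    next
      case False
      then have uA: "u \<in> A" using u by auto
      show ?thesis
      proof (cases "w = v")
        case True
        then have "u \<in> N" using e E_sym uA by (auto simp: N_def)
        then have "snd (f u) \<noteq> c" using c by (auto simp: D_def)
        then show ?thesis using True False side[OF uA] e by (auto simp: f'_def bcpm_E_def)
      next
        case False2: False
        then have "w \<in> A" using w by auto
        then show ?thesis using g uA e False False2 by (auto simp: good_def f'_def)
      qed
    qed
  qed
  then show ?thesis unfolding f'_def by blast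
qed

lemma ext_all:
  assumes "finite F"
  shows "F \<subseteq> bcpm_V n \<Longrightarrow> good n s A f \<Longrightarrow> \<exists>g. good n s (A \<union> F) g \<and> (\<forall>x\<in>A. g x = f x)"
  using assms
proof (induction F arbitrary: A f rule: finite_induct)
  case empty
  then show ?case by auto
next
  case (insert x F)
  show ?case
  proof (cases "x \<in> A")
    case True
    then have "A \<union> insert x F = A \<union> F" by auto
    then show ?thesis using insert by auto
  next
    case False
    then obtain c where c: "good n s (insert x A) (f(x := (fst x \<noteq> s, c)))"
      using step_ext[OF insert.prems(2)] insert.prems(1) by blast
    obtain g where g: "good n s (insert x A \<union> F) g"
      "\<forall>y\<in>insert x A. g y = (f(x := (fst x \<noteq> s, c))) y"
      using insert.IH[OF _ c] insert.prems(1) by auto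
    have "insert x A \<union> F = A \<union> insert x F" by auto
    then show ?thesis using g False by (metis fun_upd_other insertCI)
  qed
qed

lemma morphic_self: "C_HH_morphic (bcpm_V n) bcpm_E (bcpm_V n) bcpm_E"
  unfolding C_HH_morphic_def
proof (intro allI impI)
  fix A B f
  assume H: "A \<subseteq> bcpm_V n \<and> finite A \<and> connected_on bcpm_E A \<and> B \<subseteq> bcpm_V n \<and>
        is_hom A bcpm_E B bcpm_E f \<and> f ` A = B"
  then obtain a0 where a0: "a0 \<in> A" by (auto simp: connected_on_def)
  define s where "s = (fst a0 \<noteq> fst (f a0))"
  have reach: "\<And>u. (\<lambda>u v. u \<in> A \<and> v \<in> A \<and> bcpm_E u v)\<^sup>*\<^sup>* a0 u \<Longrightarrow> fst (f u) = (fst u \<noteq> s)"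
  proof -
    fix u assume "(\<lambda>u v. u \<in> A \<and> v \<in> A \<and> bcpm_E u v)\<^sup>*\<^sup>* a0 u"
    then show "fst (f u) = (fst u \<noteq> s)"
    proof (induction rule: rtranclp_induct)
      case base
      then show ?case by (auto simp: s_def)
    next
      case (step y z)
      then have "bcpm_E (f y) (f z)" using H by (auto simp: is_hom_def)
      then show ?case using step by (auto simp: bcpm_E_def)
    qed
  qed
  have "good n s A f"
    unfolding good_def using H reach a0 by (auto simp: is_hom_def connected_on_def)
  then obtain g where g: "good n s (A \<union> bcpm_V n) g" "\<forall>x\<in>A. g x = f x"
    using ext_all[OF finite_V] by blast
  have "A \<union> bcpm_V n = bcpm_V n" using H by auto
  then have "is_hom (bcpm_V n) bcpm_E (bcpm_V n) bcpm_E g" using g by (auto simp: good_def is_hom_def)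
  then show "\<exists>g. is_hom (bcpm_V n) bcpm_E (bcpm_V n) bcpm_E g \<and> (\<forall>x\<in>A. g x = f x)" using g by blast
qed

lemma pick3: "(m::nat) \<ge> 3 \<Longrightarrow> \<exists>k<m. k \<noteq> a \<and> k \<noteq> b"
proof -
  assume "m \<ge> 3"
  show ?thesis
  proof (cases "a \<noteq> 0 \<and> b \<noteq> 0")
    case True then show ?thesis using \<open>m \<ge> 3\<close> by (intro exI[of _ 0]) simp
  next
    case F1: False
    show ?thesis
    proof (cases "a \<noteq> 1 \<and> b \<noteq> 1")
      case True then show ?thesis using \<open>m \<ge> 3\<close> by (intro exI[of _ 1]) simp
    next
      case False then show ?thesis using F1 \<open>m \<ge> 3\<close> by (intro exI[of _ 2]) auto
    qed
  qed
qed

lemma conn: assumes "m \<ge> 3" shows "connected_on bcpm_E (bcpm_V m)"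
  unfolding connected_on_def
proof (intro conjI ballI)
  have "(True,0) \<in> bcpm_V m" using assms by (simp add: bcpm_V_def)
  then show "bcpm_V m \<noteq> {}" by blast
next
  fix u v assume u: "u \<in> bcpm_V m" and v: "v \<in> bcpm_V m"
  let ?R = "\<lambda>u v. u \<in> bcpm_V m \<and> v \<in> bcpm_V m \<and> bcpm_E u v"
  show "?R\<^sup>*\<^sup>* u v"
  proof (cases "fst u = fst v")
    case True
    obtain k where k: "k < m" "k \<noteq> snd u" "k \<noteq> snd v" using pick3[OF assms] by blast
    have "?R u (\<not> fst u, k)" "?R (\<not> fst u, k) v" using u v k True
      by (auto simp: bcpm_V_def bcpm_E_def)
    then show ?thesis
      by (rule converse_rtranclp_into_rtranclp[OF _ r_into_rtranclp])
  next
    case False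
    show ?thesis
    proof (cases "snd u = snd v")
      case False2: False
      then have "?R u v" using u v False by (auto simp: bcpm_E_def)
      then show ?thesis by auto
    next
      case True
      obtain k where k: "k < m" "k \<noteq> snd u" "k \<noteq> snd u" using pick3[OF assms] by blast
      obtain k' where k': "k' < m" "k' \<noteq> snd u" "k' \<noteq> k" using pick3[OF assms] by blast
      have "?R u (fst v, k)" "?R (fst v, k) (fst u, k')" "?R (fst u, k') v"
        using u v k k' True False by (auto simp: bcpm_V_def bcpm_E_def)
      then show ?thesis
        by (intro converse_rtranclp_into_rtranclp[OF _ converse_rtranclp_into_rtranclp[OF _ r_into_rtranclp]])
    qed
  qed
qed

lemma not_morphic:
  assumes "m \<ge> 3" "m < n"
  shows "\<not> C_HH_morphic (bcpm_V n) bcpm_E (bcpm_V m) bcpm_E"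
proof
  assume M: "C_HH_morphic (bcpm_V n) bcpm_E (bcpm_V m) bcpm_E"
  have sub: "bcpm_V m \<subseteq> bcpm_V n" using assms by (auto simp: bcpm_V_def)
  have "is_hom (bcpm_V m) bcpm_E (bcpm_V m) bcpm_E id" by (auto simp: is_hom_def)
  moreover have "id ` bcpm_V m = bcpm_V m" by simp
  ultimately have "\<exists>g. is_hom (bcpm_V n) bcpm_E (bcpm_V m) bcpm_E g \<and> (\<forall>x\<in>bcpm_V m. g x = id x)"
    using M sub conn[OF assms(1)] finite_V[of m] unfolding C_HH_morphic_def by blast
  then obtain g where g: "is_hom (bcpm_V n) bcpm_E (bcpm_V m) bcpm_E g" "\<forall>x\<in>bcpm_V m. g x = id x"
    by blast
  define x where "x = (False, m)"
  have xV: "x \<in> bcpm_V n" using assms by (auto simp: x_def bcpm_V_def)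
  then have "g x \<in> bcpm_V m" using g by (auto simp: is_hom_def)
  then have j: "snd (g x) < m" by (auto simp: bcpm_V_def)
  define y where "y = (True, snd (g x))"
  have yV: "y \<in> bcpm_V m" using j by (auto simp: y_def bcpm_V_def)
  have "bcpm_E x y" using j by (auto simp: x_def y_def bcpm_E_def)
  then have "bcpm_E (g x) (g y)" using g(1) xV yV sub unfolding is_hom_def by blast
  moreover have "g y = y" using g(2) yV by simp
  ultimately show False by (auto simp: y_def bcpm_E_def)
qed

theorem lemma6p4:
  fixes n1 n2 :: nat
  assumes "n1 \<ge> 3" and "n2 \<ge> 3"
  shows "C_HH_symmetric (bcpm_V n1) bcpm_E (bcpm_V n2) bcpm_E
         \<longleftrightarrow> graph_iso (bcpm_V n1) bcpm_E (bcpm_V n2) bcpm_E"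
proof
  assume S: "C_HH_symmetric (bcpm_V n1) bcpm_E (bcpm_V n2) bcpm_E"
  have "n1 = n2"
  proof (rule ccontr)
    assume "n1 \<noteq> n2"
    then consider "n1 < n2" | "n2 < n1" by linarith
    then show False
    proof cases
      case 1 then show False using S not_morphic[OF assms(1)] unfolding C_HH_symmetric_def by blast
    next
      case 2 then show False using S not_morphic[OF assms(2)] unfolding C_HH_symmetric_def by blast
    qed
  qed
  then show "graph_iso (bcpm_V n1) bcpm_E (bcpm_V n2) bcpm_E"
    unfolding graph_iso_def by (intro exI[of _ id]) auto
next
  assume "graph_iso (bcpm_V n1) bcpm_E (bcpm_V n2) bcpm_E"
  then obtain h where "bij_betw h (bcpm_V n1) (bcpm_V n2)" unfolding graph_iso_def by blast
  then have "card (bcpm_V n1) = card (bcpm_V n2)" by (rule bij_betw_same_card)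
  then have "n1 = n2" by (simp add: card_V)
  then show "C_HH_symmetric (bcpm_V n1) bcpm_E (bcpm_V n2) bcpm_E"
    unfolding C_HH_symmetric_def using morphic_self by simp
qed

end
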